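(* Let $n\ge 3$ be an odd integer. Then $$\sum_{k=1}^{\frac{n-1}{2}} (-1)^{k+1}\frac{\sin\frac{2k\pi}{n}}{\sin\frac{k\pi}{n}} = 1$$ and $$\sum_{k=1}^{\frac{n-1}{2}} (-1)^{k+1}\frac{\sin\frac{k\pi}{n}}{\sin\frac{2k\pi}{n}} = (-1)^{\frac{n+1}{2}}\left(\frac{n-1}{4}\right) + \frac{\chi_o\left(\frac{n-1}{2}\right)}{2},$$ where $\chi_o(m)=1$ if $m$ is odd and $\chi_o(m)=0$ if $m$ is even. *)

theory Defs
  imports Complex_Main
begin

definition chi_o :: "nat \<Rightarrow> real" where
  "chi_o m = (if odd m then 1 else 0)"

end

theory Submission imports Defs begin

lemma pc: "2 * cos (x::real) * cos y = cos (x+y) + cos (x-y)"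
  by (simp add: cos_add cos_diff)
lemma ps: "2 * sin (x::real) * cos y = sin (x+y) + sin (x-y)"
  by (simp add: sin_add sin_diff)

lemma telA: "cos (t/2) * (\<Sum>k=1..m. (-1::real)^(k+1) * (2*cos (real k * t)))
   = cos (t/2) + (-1)^(m+1) * cos ((2*real m+1)*t/2)"
proof (induction m)
  case 0 then show ?case by simp
next
  case (Suc m)
  have a1: "real (Suc m) * t + t/2 = (2*real m+3)*t/2" by (simp add: algebra_simps)
  have a2: "real (Suc m) * t - t/2 = (2*real m+1)*t/2" by (simp add: algebra_simps)
  have e: "2 * cos (real (Suc m) * t) * cos (t/2) = cos ((2*real m+3)*t/2) + cos ((2*real m+1)*t/2)"
    using pc[of "real (Suc m) * t" "t/2"] unfolding a1 a2 by simp
  have "cos (t/2) * (\<Sum>k=1..Suc m. (-1::real)^(k+1) * (2*cos (real k * t)))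
     = cos (t/2) * (\<Sum>k=1..m. (-1::real)^(k+1) * (2*cos (real k * t)))
       + (-1)^(m+2) * (2 * cos (real (Suc m) * t) * cos (t/2))"
    by (simp add: algebra_simps)
  also have "\<dots> = cos (t/2) + (-1)^(Suc m+1) * cos ((2*real (Suc m)+1)*t/2)"
    using Suc e by (simp add: algebra_simps)
  finally show ?case .
qed

lemma telB: "2 * sin (t/2) * (\<Sum>k=1..m. cos (real k * t)) = sin ((2*real m+1)*t/2) - sin (t/2)"
proof (induction m)
  case 0 then show ?case by simp
next
  case (Suc m)
  have a1: "t/2 + real (Suc m) * t = (2*real m+3)*t/2" by (simp add: algebra_simps)
  have a2: "t/2 - real (Suc m) * t = - ((2*real m+1)*t/2)" by (simp add: algebra_simps)
  have e: "2 * sin (t/2) * cos (real (Suc m) * t) = sin ((2*real m+3)*t/2) - sin ((2*real m+1)*t/2)"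
    using ps[of "t/2" "real (Suc m) * t"] unfolding a1 a2 sin_minus by simp
  show ?case using Suc e by (simp add: algebra_simps)
qed

definition T :: "nat \<Rightarrow> real \<Rightarrow> real" where
  "T m a = 1 + 2 * (\<Sum>l=1..m. (-1)^l * cos (2 * real l * a))"

lemma chebA: "cos a * T m a = (-1)^m * cos ((2*real m+1)*a)"
proof (induction m)
  case 0 then show ?case by (simp add: T_def)
next
  case (Suc m)
  have a1: "2 * real (Suc m) * a + a = (2*real m+3)*a" by (simp add: algebra_simps)
  have a2: "2 * real (Suc m) * a - a = (2*real m+1)*a" by (simp add: algebra_simps)
  have e: "2 * cos (2 * real (Suc m) * a) * cos a = cos ((2*real m+3)*a) + cos ((2*real m+1)*a)"
    using pc[of "2 * real (Suc m) * a" a] unfolding a1 a2 by simp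
  have "cos a * T (Suc m) a = cos a * T m a - (-1)^m * (2 * cos (2 * real (Suc m) * a) * cos a)"
    by (simp add: T_def algebra_simps)
  also have "\<dots> = (-1)^m * cos ((2*real m+1)*a) - (-1)^m * (cos ((2*real m+3)*a) + cos ((2*real m+1)*a))"
    by (simp only: Suc e)
  also have "\<dots> = (-1)^(Suc m) * cos ((2*real (Suc m)+1)*a)"
    by (simp add: algebra_simps)
  finally show ?case .
qed

lemma altsum: "(\<Sum>l=1..m. (-1::real)^l) = (if odd m then -1 else 0)"
  by (induction m) auto


lemma halfsum:
  assumes "1 \<le> l" "l \<le> m"
  shows "(\<Sum>k=1..m. cos (real k * (2 * real l * (pi / (2*real m+1))))) = -1/2"
proof -
  define t where "t = 2 * real l * (pi / (2*real m+1))"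
  have ht: "t/2 = real l * pi / (2*real m+1)" unfolding t_def by (simp add: field_simps)
  have pos: "0 < t/2" unfolding ht using assms by simp
  have "real l < 2*real m+1" using assms by simp
  then have "real l * pi < (2*real m+1) * pi" by simp
  then have lt: "t/2 < pi" unfolding ht by (simp add: field_simps)
  have s: "sin (t/2) > 0" using pos lt sin_gt_zero by blast
  have z: "sin ((2*real m+1)*t/2) = 0"
  proof -
    have "(2*real m+1)*t/2 = real l * pi" unfolding t_def
      by (simp add: field_simps)
    then show ?thesis by simp
  qed
  have "2 * sin (t/2) * (\<Sum>k=1..m. cos (real k * t)) = - sin (t/2)"
    using telB[of t m] z by simp
  then have "sin (t/2) * (2 * (\<Sum>k=1..m. cos (real k * t)) + 1) = 0"
    by (simp add: algebra_simps)
  then have "2 * (\<Sum>k=1..m. cos (real k * t)) + 1 = 0" using s by simp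
  then show ?thesis unfolding t_def by simp
qed

theorem theorem1:
  fixes n :: nat
  assumes "n \<ge> 3" and "odd n"
  shows "(\<Sum>k=1..(n-1) div 2. (-1::real)^(k+1) * (sin (2*k*pi/n) / sin (k*pi/n))) = 1 \<and>
         (\<Sum>k=1..(n-1) div 2. (-1::real)^(k+1) * (sin (k*pi/n) / sin (2*k*pi/n)))
         = (-1)^((n+1) div 2) * ((real n - 1) / 4) + chi_o ((n-1) div 2) / 2"
proof -
  define m where "m = (n-1) div 2"
  have nm: "n = 2*m+1" using assms unfolding m_def by presburger
  have rn: "real n = 2*real m+1" using nm by simp
  have m1: "m \<ge> 1" using assms nm by simp
  define th where "th = pi / real n"
  have thpos: "th > 0" unfolding th_def using assms by simp
  have sk: "sin (real k * th) > 0" if "1 \<le> k" "k \<le> m" for k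
  proof -
    have "real k < 2*real m+1" using that by simp
    then have "real k * pi < (2*real m+1) * pi" by simp
    then have "real k * th < pi" unfolding th_def rn by (simp add: field_simps)
    moreover have "real k * th > 0" using thpos that by simp
    ultimately show ?thesis using sin_gt_zero by blast
  qed
  have ck: "cos (real k * th) > 0" if "1 \<le> k" "k \<le> m" for k
  proof -
    have "2 * real k < 2*real m+1" using that by simp
    then have "2 * real k * pi < (2*real m+1) * pi" by simp
    then have "real k * th < pi/2" unfolding th_def rn by (simp add: field_simps)
    moreover have "real k * th > 0" using thpos that by simp
    ultimately show ?thesis using cos_gt_zero by simp
  qed
  have a1: "real k * pi / real n = real k * th" for k unfolding th_def by simp
  have a2: "sin (2 * real k * pi / real n) = 2 * sin (real k * th) * cos (real k * th)" for k
  proof -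
    have "2 * real k * pi / real n = 2 * (real k * th)" unfolding th_def by simp
    then show ?thesis by (simp only: sin_double)
  qed
  have p1: "(\<Sum>k=1..m. (-1::real)^(k+1) * (sin (2*k*pi/n) / sin (k*pi/n)))
       = (\<Sum>k=1..m. (-1::real)^(k+1) * (2 * cos (real k * th)))"
  proof (rule sum.cong)
    fix k assume "k \<in> {1..m}"
    then have "sin (real k * th) > 0" using sk by auto
    then show "(-1::real)^(k+1) * (sin (2*k*pi/n) / sin (k*pi/n)) = (-1::real)^(k+1) * (2 * cos (real k * th))"
      by (simp add: a1 a2)
  qed simp
  have c2: "cos (th/2) > 0"
  proof -
    have "th/2 < pi/2" unfolding th_def using assms by (simp add: field_simps)
    then show ?thesis using thpos cos_gt_zero by simp
  qed
  have "(2*real m+1)*th/2 = pi/2" unfolding th_def rn by simp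
  then have "cos (th/2) * (\<Sum>k=1..m. (-1::real)^(k+1) * (2 * cos (real k * th))) = cos (th/2)"
    using telA[of th m] by simp
  then have S1: "(\<Sum>k=1..m. (-1::real)^(k+1) * (2 * cos (real k * th))) = 1"
    using c2 by simp
  have p2: "(\<Sum>k=1..m. (-1::real)^(k+1) * (sin (k*pi/n) / sin (2*k*pi/n)))
       = (\<Sum>k=1..m. -(1/2) * (-1)^m * T m (real k * th))"
  proof (rule sum.cong)
    fix k assume "k \<in> {1..m}"
    then have s: "sin (real k * th) > 0" and c: "cos (real k * th) > 0" using sk ck by auto
    have "cos (real k * th) * T m (real k * th) = (-1)^m * cos ((2*real m+1)*(real k * th))"
      by (rule chebA)
    also have "(2*real m+1)*(real k * th) = real k * pi" unfolding th_def rn by simp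
    finally have e: "cos (real k * th) * T m (real k * th) = (-1)^m * (-1)^k" by simp
    have "T m (real k * th) = (-1)^m * (-1)^k / cos (real k * th)"
      using e c by (simp add: field_simps)
    then have "-(1/2) * (-1)^m * T m (real k * th) = - ((-1)^m * (-1)^m) * (-1)^k / (2 * cos (real k * th))"
      by simp
    also have "\<dots> = (-1::real)^(k+1) / (2 * cos (real k * th))"
      by (simp add: power_mult_distrib[symmetric])
    finally have e2: "-(1/2) * (-1)^m * T m (real k * th) = (-1::real)^(k+1) / (2 * cos (real k * th))" .
    have lhs: "(-1::real)^(k+1) * (sin (k*pi/n) / sin (2*k*pi/n)) = (-1::real)^(k+1) / (2 * cos (real k * th))"
      using s by (simp add: a1 a2)
    show "(-1::real)^(k+1) * (sin (k*pi/n) / sin (2*k*pi/n)) = -(1/2) * (-1)^m * T m (real k * th)"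
      unfolding lhs e2 ..
  qed simp
  have sT: "(\<Sum>k=1..m. T m (real k * th)) = real m - (\<Sum>l=1..m. (-1::real)^l)"
  proof -
    have "(\<Sum>k=1..m. T m (real k * th)) = real m + 2 * (\<Sum>k=1..m. \<Sum>l=1..m. (-1)^l * cos (2 * real l * (real k * th)))"
      unfolding T_def by (simp add: sum.distrib sum_distrib_left)
    also have "(\<Sum>k=1..m. \<Sum>l=1..m. (-1::real)^l * cos (2 * real l * (real k * th)))
        = (\<Sum>l=1..m. (-1)^l * (\<Sum>k=1..m. cos (real k * (2 * real l * (pi / (2*real m+1))))))"
      by (subst sum.swap) (simp add: sum_distrib_left th_def rn mult_ac)
    also have "\<dots> = (\<Sum>l=1..m. (-1)^l * (-1/2))"
    proof (rule sum.cong)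
      fix l assume "l \<in> {1..m}"
      then show "(-1::real)^l * (\<Sum>k=1..m. cos (real k * (2 * real l * (pi / (2*real m+1))))) = (-1)^l * (-1/2)"
        using halfsum[of l m] by auto
    qed simp
    also have "(\<Sum>l=1..m. (-1::real)^l * (-1/2)) = -(1/2) * (\<Sum>l=1..m. (-1::real)^l)"
      by (simp add: sum_distrib_left mult.commute)
    finally show ?thesis by simp
  qed
  have R: "(-1::real)^((n+1) div 2) = - ((-1)^m)" using nm by simp
  have part2: "(\<Sum>k=1..m. (-1::real)^(k+1) * (sin (k*pi/n) / sin (2*k*pi/n)))
         = (-1)^((n+1) div 2) * ((real n - 1) / 4) + chi_o m / 2"
  proof -
    have "(\<Sum>k=1..m. -(1/2) * (-1)^m * T m (real k * th)) = -(1/2) * (-1)^m * (\<Sum>k=1..m. T m (real k * th))"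
      by (simp add: sum_distrib_left)
    also have "\<dots> = (-1)^((n+1) div 2) * ((real n - 1) / 4) + chi_o m / 2"
      unfolding sT R rn altsum chi_o_def by (cases "even m") auto
    finally show ?thesis using p2 by simp
  qed
  show ?thesis using p1 S1 part2 unfolding m_def by simp
qed

end
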